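(* Let $X\subset\mathbb{R}^2$ be a finite set in convex position, not contained in a line. Then $$\mathcal{M}_X=\bigcap\{\mathcal{M}_{\{a,b,c\}} : abc \text{ is a tallest triangle of } X\}.$$
   Context: A set $S\subset\mathbb{R}^2$ is in convex position if every point of $S$ lies on the boundary of $\mathrm{conv}(S)$. For a point set $X$ and a point $O$, $X_O=2O-X$; $O$ is an admissible center for $X$ if $X\cup X_O$ is in convex position, and $\mathcal{M}_X$ is the set of all admissible centers for $X$. For a finite set $X$ in convex position not contained in a line, a side $ab$ of $X$ is a pair of points $a,b\in X$ that are consecutive among the points of $X$ along the boundary of $\mathrm{conv}(X)$ (so the segment $ab$ lies on the boundary of $\mathrm{conv}(X)$). If $ab$ is a side and $c\in X$ is a point of $X$ at maximal distance from the line $ab$, then $abc$ is called a tallest triangle of $X$ with respect to the side $ab$. *)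

theory Defs
  imports "HOL-Analysis.Analysis"
begin

type_synonym point = "real^2"

definition convex_position :: "point set \<Rightarrow> bool" where
  "convex_position S \<longleftrightarrow> S \<subseteq> frontier (convex hull S)"

definition reflect_set :: "point set \<Rightarrow> point \<Rightarrow> point set" where
  "reflect_set X p = (\<lambda>x. 2 *\<^sub>R p - x) ` X"

definition admissible_centers :: "point set \<Rightarrow> point set" where
  "admissible_centers X = {p. convex_position (X \<union> reflect_set X p)}"

text \<open>A side ab of X: distinct points of X, consecutive along the boundary of conv(X),
  i.e. the segment ab lies on the boundary of conv(X) and contains no other point of X.\<close>
definition is_side :: "point set \<Rightarrow> point \<Rightarrow> point \<Rightarrow> bool" where
  "is_side X a b \<longleftrightarrow> a \<in> X \<and> b \<in> X \<and> a \<noteq> b \<and>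
     closed_segment a b \<subseteq> frontier (convex hull X) \<and>
     X \<inter> open_segment a b = {}"

definition tallest_triangle :: "point set \<Rightarrow> point \<Rightarrow> point \<Rightarrow> point \<Rightarrow> bool" where
  "tallest_triangle X a b c \<longleftrightarrow> is_side X a b \<and> c \<in> X \<and>
     (\<forall>x\<in>X. infdist x (affine hull {a, b}) \<le> infdist c (affine hull {a, b}))"

end

theory Submission
  imports Defs
begin


lemma inner2: "(u::real^2) \<bullet> w = u$1 * w$1 + u$2 * w$2"
  by (simp add: inner_vec_def sum_2)

lemma eq2: "((a::real^2) = b) \<longleftrightarrow> a$1 = b$1 \<and> a$2 = b$2"
  by (simp add: vec_eq_iff forall_2)

definition perp2 :: "real^2 \<Rightarrow> real^2" where
  "perp2 u = vector [-(u$2), u$1]"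

lemma perp2_comp[simp]: "perp2 u $ 1 = -(u$2)" "perp2 u $ 2 = u$1"
  by (simp_all add: perp2_def)

lemma nz2: "(u::real^2) \<noteq> 0 \<longleftrightarrow> u$1 \<noteq> 0 \<or> u$2 \<noteq> 0"
  by (auto simp: eq2)

lemma uu_pos: "(u::real^2) \<noteq> 0 \<Longrightarrow> u \<bullet> u > 0"
  by simp

lemma perp2_orth[simp]: "u \<bullet> perp2 u = 0" "perp2 u \<bullet> u = 0"
  by (simp_all add: inner2)

lemma perp2_nz: "u \<noteq> 0 \<Longrightarrow> perp2 u \<noteq> 0"
  by (auto simp: nz2)

lemma orth_zero:
  assumes "u \<noteq> 0" "u \<bullet> w = 0" "perp2 u \<bullet> w = 0"
  shows "(w::real^2) = 0"
proof -
  have h: "u$1 * w$1 + u$2 * w$2 = 0" "-(u$2) * w$1 + u$1 * w$2 = 0"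
    using assms(2,3) by (simp_all add: inner2)
  have s: "u$1*u$1 + u$2*u$2 > 0" using assms(1) uu_pos[of u] by (simp add: inner2)
  have "(u$1*u$1 + u$2*u$2) * w$1 = 0" using h by algebra
  hence "w$1 = 0" using s by (cases "w$1 = 0") auto
  moreover have "(u$1*u$1 + u$2*u$2) * w$2 = 0" using h by algebra
  hence "w$2 = 0" using s by (cases "w$2 = 0") auto
  ultimately show ?thesis by (simp add: eq2)
qed

lemma par:
  assumes "u \<noteq> 0" "u \<bullet> w1 = 0" "u \<bullet> w2 = 0" "(w1::real^2) \<noteq> 0"
  shows "w2 = ((w1 \<bullet> w2) / (w1 \<bullet> w1)) *\<^sub>R w1"
proof -
  let ?c = "(w1 \<bullet> w2) / (w1 \<bullet> w1)"
  have w1: "w1 \<bullet> w1 > 0" using assms(4) by simp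
  have "u \<bullet> (w2 - ?c *\<^sub>R w1) = 0" using assms by (simp add: inner_diff_right)
  moreover have "w1 \<bullet> (w2 - ?c *\<^sub>R w1) = 0" using w1 by (simp add: inner_diff_right)
  ultimately have "w2 - ?c *\<^sub>R w1 = 0"
  proof -
    assume a: "u \<bullet> (w2 - ?c *\<^sub>R w1) = 0" and b: "w1 \<bullet> (w2 - ?c *\<^sub>R w1) = 0"
    define r where "r = w2 - ?c *\<^sub>R w1"
    have a': "u \<bullet> r = 0" and b': "w1 \<bullet> r = 0" using a b by (simp_all add: r_def)
    have w1eq: "w1 = ((perp2 u \<bullet> w1) / (u \<bullet> u)) *\<^sub>R perp2 u"
    proof -
      have "u \<bullet> (w1 - ((perp2 u \<bullet> w1) / (u \<bullet> u)) *\<^sub>R perp2 u) = 0"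
        using assms(2) by (simp add: inner_diff_right)
      moreover have "perp2 u \<bullet> (w1 - ((perp2 u \<bullet> w1) / (u \<bullet> u)) *\<^sub>R perp2 u) = 0"
      proof -
        have "perp2 u \<bullet> perp2 u = u \<bullet> u" by (simp add: inner2 algebra_simps)
        thus ?thesis using assms(1) by (simp add: inner_diff_right)
      qed
      ultimately show ?thesis using orth_zero[OF assms(1)] by (metis eq_iff_diff_eq_0)
    qed
    have pw: "perp2 u \<bullet> w1 \<noteq> 0"
    proof
      assume "perp2 u \<bullet> w1 = 0"
      then have "w1 = 0" using w1eq by simp
      thus False using assms(4) by simp
    qed
    have "perp2 u \<bullet> r = 0"
    proof -
      have "w1 \<bullet> r = ((perp2 u \<bullet> w1) / (u \<bullet> u)) * (perp2 u \<bullet> r)"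
        by (subst w1eq) simp
      thus ?thesis using b' pw assms(1) by simp
    qed
    thus ?thesis using orth_zero[OF assms(1) a'] r_def by simp
  qed
  thus ?thesis by simp
qed

lemma support_exists:
  fixes S :: "'a::euclidean_space set"
  assumes "convex S" "x \<in> S" "x \<notin> interior S"
  shows "\<exists>a. a \<noteq> 0 \<and> (\<forall>y\<in>S. a \<bullet> y \<le> a \<bullet> x)"
proof (cases "affine hull S = UNIV")
  case True
  then have "rel_interior S = interior S" by (rule rel_interior_interior)
  then have "x \<notin> rel_interior S" using assms by simp
  moreover have "x \<in> closure S" using assms(2) closure_subset by auto
  ultimately obtain a where "a \<noteq> 0" "\<And>y. y \<in> closure S \<Longrightarrow> a \<bullet> x \<le> a \<bullet> y"
    using supporting_hyperplane_relative_frontier[OF assms(1)] by metis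
  then show ?thesis using closure_subset by (intro exI[of _ "-a"]) auto
next
  case False
  then have "aff_dim S < int DIM('a)" using aff_dim_lt_full by auto
  then obtain a b where "a \<noteq> 0" "S \<subseteq> {y. a \<bullet> y = b}" using aff_lowdim_subset_hyperplane by metis
  then have "\<forall>y\<in>S. a \<bullet> y = a \<bullet> x" using assms(2) by blast
  then show ?thesis using \<open>a \<noteq> 0\<close> by (intro exI[of _ a]) auto
qed

lemma not_interior_by_support:
  fixes H :: "'a::euclidean_space set"
  assumes "u \<noteq> 0" "\<forall>q\<in>H. u \<bullet> q \<le> u \<bullet> p"
  shows "p \<notin> interior (convex hull H)"
proof
  assume p: "p \<in> interior (convex hull H)"
  have sub: "convex hull H \<subseteq> {q. u \<bullet> q \<le> u \<bullet> p}"
    by (rule hull_minimal) (use assms(2) convex_halfspace_le in auto)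
  obtain e where e: "e > 0" "ball p e \<subseteq> convex hull H"
    using p by (meson open_contains_ball open_interior interior_subset subset_trans)
  define q where "q = p + (e / 2 / norm u) *\<^sub>R u"
  have "dist p q < e" using e(1) assms(1) by (simp add: q_def dist_norm)
  then have "q \<in> convex hull H" using e(2) by auto
  then have "u \<bullet> q \<le> u \<bullet> p" using sub by auto
  moreover have "u \<bullet> q = u \<bullet> p + e / 2 * norm u"
    using assms(1) by (simp add: q_def inner_add_right dot_square_norm power2_eq_square)
  moreover have "e * norm u > 0" using e(1) assms(1) by simp
  ultimately show False by simp
qed



definition good :: "point set \<Rightarrow> point \<Rightarrow> point \<Rightarrow> bool" where
  "good S x z \<longleftrightarrow> (\<exists>u. u \<noteq> 0 \<and> (\<forall>s\<in>S. u \<bullet> z \<le> u \<bullet> s \<and> u \<bullet> s \<le> u \<bullet> x))"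

lemma refl_inner: "u \<bullet> (2 *\<^sub>R p - s) = 2 * (u \<bullet> p) - u \<bullet> (s::'a::real_inner)"
  by (simp add: inner_diff_right)

lemma mem_refl: "r \<in> X \<union> reflect_set X p \<longleftrightarrow> r \<in> X \<or> (\<exists>s\<in>X. r = 2 *\<^sub>R p - s)"
  by (auto simp: reflect_set_def)

lemma good_imp_cp:
  assumes "\<forall>x\<in>X. good X x (2 *\<^sub>R p - x)"
  shows "convex_position (X \<union> reflect_set X p)"
  unfolding convex_position_def
proof
  fix q assume q: "q \<in> X \<union> reflect_set X p"
  let ?H = "X \<union> reflect_set X p"
  have "q \<in> closure (convex hull ?H)" using hull_inc[OF q] closure_subset by blast
  moreover have "q \<notin> interior (convex hull ?H)"
  proof -
    obtain x where x: "x \<in> X" "q = x \<or> q = 2 *\<^sub>R p - x" using q unfolding mem_refl by blast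
    obtain u where u: "u \<noteq> 0" "\<And>s. s\<in>X \<Longrightarrow> u \<bullet> (2 *\<^sub>R p - x) \<le> u \<bullet> s \<and> u \<bullet> s \<le> u \<bullet> x"
      using assms x(1) unfolding good_def by blast
    have A: "u \<bullet> r \<le> u \<bullet> x" if "r \<in> ?H" for r
    proof -
      have "r \<in> X \<or> (\<exists>s\<in>X. r = 2 *\<^sub>R p - s)" using that unfolding mem_refl .
      then show ?thesis
      proof
        assume "r \<in> X" then show ?thesis using u(2) by blast
      next
        assume "\<exists>s\<in>X. r = 2 *\<^sub>R p - s"
        then obtain s where s: "s \<in> X" "r = 2 *\<^sub>R p - s" by blast
        have "u \<bullet> (2 *\<^sub>R p - x) \<le> u \<bullet> s" using u(2)[OF s(1)] by blast
        then show ?thesis unfolding s(2) refl_inner by linarith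
      qed
    qed
    have B: "(-u) \<bullet> r \<le> (-u) \<bullet> (2 *\<^sub>R p - x)" if "r \<in> ?H" for r
    proof -
      have "r \<in> X \<or> (\<exists>s\<in>X. r = 2 *\<^sub>R p - s)" using that unfolding mem_refl .
      then show ?thesis
      proof
        assume "r \<in> X" then show ?thesis using u(2) by simp
      next
        assume "\<exists>s\<in>X. r = 2 *\<^sub>R p - s"
        then obtain s where s: "s \<in> X" "r = 2 *\<^sub>R p - s" by blast
        have "u \<bullet> s \<le> u \<bullet> x" using u(2)[OF s(1)] by blast
        then show ?thesis unfolding s(2) inner_minus_left refl_inner by linarith
      qed
    qed
    show ?thesis
    proof (cases "q = x")
      case True
      then show ?thesis using not_interior_by_support[OF u(1)] A by blast
    next
      case False
      then have qq: "q = 2 *\<^sub>R p - x" using x by auto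
      have "-u \<noteq> 0" using u(1) by simp
      then show ?thesis using not_interior_by_support[of "-u" ?H q] B qq by blast
    qed
  qed
  ultimately show "q \<in> frontier (convex hull ?H)" by (simp add: frontier_def)
qed

lemma cp_imp_good:
  assumes "convex_position (T \<union> reflect_set T p)" "x \<in> T"
  shows "good T x (2 *\<^sub>R p - x)"
proof -
  let ?H = "convex hull (T \<union> reflect_set T p)"
  have "x \<in> frontier ?H" using assms unfolding convex_position_def by blast
  then have "x \<notin> interior ?H" by (simp add: frontier_def)
  moreover have xH: "x \<in> ?H" using assms(2) by (intro hull_inc) blast
  moreover have "convex ?H" by (rule convex_convex_hull)
  ultimately obtain a where a: "a \<noteq> 0" "\<And>y. y\<in>?H \<Longrightarrow> a \<bullet> y \<le> a \<bullet> x"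
    using support_exists[of ?H x] by blast
  have "a \<bullet> (2 *\<^sub>R p - x) \<le> a \<bullet> s \<and> a \<bullet> s \<le> a \<bullet> x" if s: "s \<in> T" for s
  proof -
    have "s \<in> T \<union> reflect_set T p" using s by blast
    then have "s \<in> ?H" by (rule hull_inc)
    moreover have "2 *\<^sub>R p - s \<in> T \<union> reflect_set T p" using s unfolding mem_refl by blast
    then have "2 *\<^sub>R p - s \<in> ?H" by (rule hull_inc)
    ultimately have "a \<bullet> s \<le> a \<bullet> x" "a \<bullet> (2 *\<^sub>R p - s) \<le> a \<bullet> x" using a(2) by blast+
    then show ?thesis unfolding refl_inner by linarith
  qed
  then show ?thesis using a(1) unfolding good_def by blast
qed

lemma cp_mono:
  assumes "convex_position S" "S' \<subseteq> S"
  shows "convex_position S'"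
  unfolding convex_position_def
proof
  fix q assume q: "q \<in> S'"
  have "q \<in> closure (convex hull S')" using hull_inc[OF q] closure_subset by blast
  moreover have "q \<notin> interior (convex hull S')"
  proof
    assume "q \<in> interior (convex hull S')"
    then have "q \<in> interior (convex hull S)" using hull_mono[OF assms(2)] interior_mono by blast
    moreover have "q \<in> frontier (convex hull S)" using assms q unfolding convex_position_def by blast
    ultimately show False by (simp add: frontier_def)
  qed
  ultimately show "q \<in> frontier (convex hull S')" by (simp add: frontier_def)
qed




definition gmin :: "point set \<Rightarrow> point \<Rightarrow> real" where
  "gmin X u = Min ((\<lambda>s. u \<bullet> s) ` X)"

lemma gmin_le: "finite X \<Longrightarrow> s \<in> X \<Longrightarrow> gmin X u \<le> u \<bullet> s"
  unfolding gmin_def by (rule Min_le) auto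

lemma gmin_in: "finite X \<Longrightarrow> X \<noteq> {} \<Longrightarrow> \<exists>s\<in>X. gmin X u = u \<bullet> s"
proof -
  assume "finite X" "X \<noteq> {}"
  then have "Min ((\<lambda>s. u \<bullet> s) ` X) \<in> (\<lambda>s. u \<bullet> s) ` X" by (intro Min_in) auto
  then show ?thesis unfolding gmin_def by auto
qed

lemma gmin_eqI: "finite X \<Longrightarrow> s \<in> X \<Longrightarrow> (\<And>t. t \<in> X \<Longrightarrow> u \<bullet> s \<le> u \<bullet> t) \<Longrightarrow> gmin X u = u \<bullet> s"
  by (metis antisym gmin_in gmin_le empty_iff)

lemma gmin_scale:
  assumes "finite X" "X \<noteq> {}" "c \<ge> 0"
  shows "gmin X (c *\<^sub>R u) = c * gmin X u"
proof -
  obtain s where s: "s \<in> X" "gmin X u = u \<bullet> s" using gmin_in[OF assms(1,2)] by blast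
  have "gmin X (c *\<^sub>R u) = (c *\<^sub>R u) \<bullet> s"
  proof (rule gmin_eqI[OF assms(1) s(1)])
    fix t assume "t \<in> X"
    then have "u \<bullet> s \<le> u \<bullet> t" using s gmin_le[OF assms(1)] by metis
    then show "(c *\<^sub>R u) \<bullet> s \<le> (c *\<^sub>R u) \<bullet> t" using assms(3) by (simp add: mult_left_mono)
  qed
  then show ?thesis using s by simp
qed

lemma gmin_cont:
  assumes "finite X" "X \<noteq> {}"
  shows "continuous_on A (gmin X)"
  using assms
proof (induction X rule: finite_ne_induct)
  case (singleton x)
  then show ?case by (simp add: gmin_def continuous_intros)
next
  case (insert x F)
  have "gmin (insert x F) = (\<lambda>u. min (u \<bullet> x) (gmin F u))"
    using insert by (auto simp: gmin_def fun_eq_iff)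
  then show ?case using insert by (simp add: continuous_intros)
qed

lemma hull_le: "(\<forall>s\<in>X. v \<bullet> s \<le> c) \<Longrightarrow> y \<in> convex hull X \<Longrightarrow> v \<bullet> y \<le> (c::real)"
proof -
  assume "\<forall>s\<in>X. v \<bullet> s \<le> c" "y \<in> convex hull X"
  moreover have "convex hull X \<subseteq> {y. v \<bullet> y \<le> c}"
    by (rule hull_minimal) (use \<open>\<forall>s\<in>X. v \<bullet> s \<le> c\<close> convex_halfspace_le in auto)
  ultimately show ?thesis by blast
qed

lemma hull_ge: "(\<forall>s\<in>X. c \<le> v \<bullet> s) \<Longrightarrow> y \<in> convex hull X \<Longrightarrow> (c::real) \<le> v \<bullet> y"
  using hull_le[of X "-v" "-c" y] by simp

lemma frontier_by_support:
  assumes "finite X" "v \<noteq> 0" "q \<in> convex hull X" "\<forall>s\<in>X. v \<bullet> s \<le> v \<bullet> q"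
  shows "q \<in> frontier (convex hull (X::point set))"
proof -
  have "q \<notin> interior (convex hull X)" using not_interior_by_support[OF assms(2,4)] .
  moreover have "closed (convex hull X)" using assms(1) finite_imp_compact_convex_hull compact_imp_closed by blast
  ultimately show ?thesis using assms(3) by (simp add: frontier_def)
qed




lemma infdist_line:
  assumes "a \<noteq> b" "v \<noteq> 0" "v \<bullet> a = v \<bullet> b"
  shows "infdist p (affine hull {a, b}) = \<bar>v \<bullet> p - v \<bullet> a\<bar> / norm (v::point)"
proof -
  let ?L = "affine hull {a, b}"
  have L: "?L = range (\<lambda>u. a + u *\<^sub>R (b - a))" by (rule affine_hull_2_alt)
  have vq: "v \<bullet> q = v \<bullet> a" if "q \<in> ?L" for q
  proof -
    from that obtain u where "q = a + u *\<^sub>R (b - a)" unfolding L by auto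
    then show ?thesis using assms(3) by (simp add: inner_add_right inner_diff_right)
  qed
  have nv: "norm v > 0" using assms(2) by simp
  have lower: "\<bar>v \<bullet> p - v \<bullet> a\<bar> / norm v \<le> dist p q" if "q \<in> ?L" for q
  proof -
    have "\<bar>v \<bullet> (p - q)\<bar> \<le> norm v * norm (p - q)" by (rule Cauchy_Schwarz_ineq2)
    moreover have "v \<bullet> (p - q) = v \<bullet> p - v \<bullet> a" using vq[OF that] by (simp add: inner_diff_right)
    ultimately show ?thesis using nv by (simp add: dist_norm divide_le_eq mult.commute)
  qed
  define q0 where "q0 = p - ((v \<bullet> p - v \<bullet> a) / (v \<bullet> v)) *\<^sub>R v"
  have vv: "v \<bullet> v > 0" using assms(2) by simp
  have "v \<bullet> (q0 - a) = 0" using vv by (simp add: q0_def inner_diff_right)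
  moreover have "v \<bullet> (b - a) = 0" using assms(3) by (simp add: inner_diff_right)
  moreover have "b - a \<noteq> 0" using assms(1) by simp
  ultimately have "q0 - a = (((b - a) \<bullet> (q0 - a)) / ((b - a) \<bullet> (b - a))) *\<^sub>R (b - a)"
    using par[OF assms(2)] by blast
  then have "q0 = a + (((b - a) \<bullet> (q0 - a)) / ((b - a) \<bullet> (b - a))) *\<^sub>R (b - a)"
    by (metis add.commute diff_add_cancel)
  then have q0L: "q0 \<in> ?L" unfolding L by (rule image_eqI) simp
  have "dist p q0 = \<bar>v \<bullet> p - v \<bullet> a\<bar> / (v \<bullet> v) * norm v"
    by (simp add: q0_def dist_norm)
  also have "\<dots> = \<bar>v \<bullet> p - v \<bullet> a\<bar> / norm v"
    using nv by (simp add: dot_square_norm power2_eq_square)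
  finally have d0: "dist p q0 = \<bar>v \<bullet> p - v \<bullet> a\<bar> / norm v" .
  have ne: "?L \<noteq> {}" using q0L by blast
  show ?thesis
  proof (rule antisym)
    show "infdist p ?L \<le> \<bar>v \<bullet> p - v \<bullet> a\<bar> / norm v" using infdist_le[OF q0L, of p] d0 by simp
    show "\<bar>v \<bullet> p - v \<bullet> a\<bar> / norm v \<le> infdist p ?L"
      unfolding infdist_notempty[OF ne] by (rule cINF_greatest[OF ne]) (use lower in auto)
  qed
qed




lemma real_key:
  fixes A B al be :: real
  assumes "A \<le> 0" "B \<le> 0" "al * A + be * B \<le> A" "al * A + be * B \<le> B"
    "al < 1" "be < 1" "al + be < 1"
  shows "A = 0 \<and> B = 0"
proof -
  have a1: "(1 - al) * (-A) \<le> be * (-B)" using assms(3) by (simp add: algebra_simps)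
  have a2: "(1 - be) * (-B) \<le> al * (-A)" using assms(4) by (simp add: algebra_simps)
  have "A = 0"
  proof (rule ccontr)
    assume "A \<noteq> 0"
    then have pA: "-A > 0" using assms(1) by simp
    have "(1 - al) * (-A) > 0" using pA assms(5) by (intro mult_pos_pos) auto
    then have h: "be * (-B) > 0" using a1 by linarith
    then have "B \<noteq> 0" by auto
    then have pB: "-B > 0" using assms(2) by linarith
    have pbe: "be > 0"
    proof (rule ccontr)
      assume "\<not> be > 0"
      then have "be * (-B) \<le> 0" using pB by (intro mult_nonpos_nonneg) auto
      then show False using h by linarith
    qed
    have "(1 - be) * (-B) > 0" using pB assms(6) by (intro mult_pos_pos) auto
    then have h2: "al * (-A) > 0" using a2 by linarith
    have pal: "al > 0"
    proof (rule ccontr)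
      assume "\<not> al > 0"
      then have "al * (-A) \<le> 0" using pA by (intro mult_nonpos_nonneg) auto
      then show False using h2 by linarith
    qed
    have "(1 - al) * (-A) * ((1 - be) * (-B)) \<le> be * (-B) * (al * (-A))"
      using a1 a2 \<open>(1 - be) * (-B) > 0\<close> \<open>(1 - al) * (-A) > 0\<close>
      by (meson less_eq_real_def mult_mono' )
    then have "(1 - al - be) * ((-A) * (-B)) \<le> 0" by (simp add: algebra_simps)
    moreover have "(1 - al - be) * ((-A) * (-B)) > 0" using pA pB assms(7) by (intro mult_pos_pos) auto
    ultimately show False by simp
  qed
  moreover have "B = 0"
  proof -
    have "(1 - be) * (-B) \<le> 0" using a2 \<open>A = 0\<close> by simp
    show ?thesis
    proof (rule ccontr)
      assume "B \<noteq> 0"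
      then have "-B > 0" using assms(2) by linarith
      then have "(1 - be) * (-B) > 0" using assms(6) by (intro mult_pos_pos) auto
      then show False using \<open>(1 - be) * (-B) \<le> 0\<close> by linarith
    qed
  qed
  ultimately show ?thesis by simp
qed

lemma orth_collinear:
  assumes "u \<noteq> 0" "\<forall>p\<in>S. u \<bullet> (p - x) = 0"
  shows "collinear (S::point set)"
proof -
  have rep: "p - x = ((perp2 u \<bullet> (p - x)) / (perp2 u \<bullet> perp2 u)) *\<^sub>R perp2 u" if "p \<in> S" for p
    using par[OF assms(1) perp2_orth(1) _ perp2_nz[OF assms(1)]] assms(2) that by blast
  show ?thesis unfolding collinear_def
  proof (rule exI[of _ "perp2 u"], intro ballI)
    fix p q assume "p \<in> S" "q \<in> S"
    have "p - q = (p - x) - (q - x)" by simp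
    also have "\<dots> = ((perp2 u \<bullet> (p - x)) / (perp2 u \<bullet> perp2 u) - (perp2 u \<bullet> (q - x)) / (perp2 u \<bullet> perp2 u)) *\<^sub>R perp2 u"
      using rep[OF \<open>p \<in> S\<close>] rep[OF \<open>q \<in> S\<close>] by (metis scaleR_left_diff_distrib)
    finally show "\<exists>c. p - q = c *\<^sub>R perp2 u" by blast
  qed
qed

lemma bad_triangle:
  assumes "\<not> collinear {x, a, b}" "z - x = al *\<^sub>R (a - x) + be *\<^sub>R (b - x)"
    "al < 1" "be < 1" "al + be < 1"
  shows "\<not> good {x, a, b} x z"
proof
  assume "good {x, a, b} x z"
  then obtain u where u: "u \<noteq> 0" "\<forall>s\<in>{x,a,b}. u \<bullet> z \<le> u \<bullet> s \<and> u \<bullet> s \<le> u \<bullet> x"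
    unfolding good_def by blast
  let ?A = "u \<bullet> (a - x)" and ?B = "u \<bullet> (b - x)"
  have uz: "u \<bullet> z = u \<bullet> x + al * ?A + be * ?B"
  proof -
    have "u \<bullet> (z - x) = al * ?A + be * ?B" using assms(2) by (simp add: inner_add_right)
    then show ?thesis by (simp add: inner_diff_right)
  qed
  have "?A \<le> 0" "?B \<le> 0" using u(2) by (auto simp: inner_diff_right)
  moreover have "al * ?A + be * ?B \<le> ?A" "al * ?A + be * ?B \<le> ?B"
    using u(2) uz by (auto simp: inner_diff_right)
  ultimately have "?A = 0 \<and> ?B = 0" using real_key assms(3-5) by blast
  then have "\<forall>p\<in>{x,a,b}. u \<bullet> (p - x) = 0" by auto
  then show False using orth_collinear[OF u(1)] assms(1) by blast
qed

lemma consec: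
  assumes "finite X" "a \<in> X" "S = {s\<in>X. v \<bullet> s = v \<bullet> a \<and> 0 < e \<bullet> (s - a)}" "S \<noteq> {}"
  shows "\<exists>b\<in>S. X \<inter> open_segment a b = {}"
proof -
  have fS: "finite S" using assms(1,3) by simp
  define m where "m = Min ((\<lambda>s. e \<bullet> (s - a)) ` S)"
  have "m \<in> (\<lambda>s. e \<bullet> (s - a)) ` S" unfolding m_def using fS assms(4) by (intro Min_in) auto
  then obtain b where b: "b \<in> S" "e \<bullet> (b - a) = m" by auto
  have mle: "m \<le> e \<bullet> (s - a)" if "s \<in> S" for s unfolding m_def using fS that by (intro Min_le) auto
  have "X \<inter> open_segment a b = {}"
  proof (rule ccontr)
    assume "X \<inter> open_segment a b \<noteq> {}"
    then obtain q where q: "q \<in> X" "q \<in> open_segment a b" by blast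
    then obtain t where t: "0 < t" "t < 1" "q = (1 - t) *\<^sub>R a + t *\<^sub>R b" unfolding in_segment by blast
    have qa: "q - a = t *\<^sub>R (b - a)" using t(3) by (simp add: algebra_simps)
    have vb: "v \<bullet> b = v \<bullet> a" "0 < e \<bullet> (b - a)" using b(1) assms(3) by auto
    have "v \<bullet> q = v \<bullet> a"
    proof -
      have "v \<bullet> (q - a) = 0" using qa vb by (simp add: inner_diff_right)
      then show ?thesis by (simp add: inner_diff_right)
    qed
    moreover have eq: "e \<bullet> (q - a) = t * (e \<bullet> (b - a))" using qa by simp
    moreover have "0 < t * (e \<bullet> (b - a))" using t vb by simp
    ultimately have "q \<in> S" using q(1) assms(3) by auto
    then have "m \<le> t * (e \<bullet> (b - a))" using mle eq by metis
    moreover have "t * (e \<bullet> (b - a)) < e \<bullet> (b - a)" using t vb by simp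
    ultimately show False using b(2) by simp
  qed
  then show ?thesis using b(1) by blast
qed

lemma tallest_from_dir:
  assumes "finite X" "v \<noteq> 0" "a \<in> X" "b \<in> X" "a \<noteq> b"
    "\<forall>s\<in>X. v \<bullet> s \<le> v \<bullet> a" "v \<bullet> b = v \<bullet> a" "X \<inter> open_segment a b = {}"
    "c \<in> X" "\<forall>s\<in>X. v \<bullet> c \<le> v \<bullet> s"
  shows "tallest_triangle X a b c"
proof -
  have seg: "closed_segment a b \<subseteq> frontier (convex hull X)"
  proof
    fix q assume q: "q \<in> closed_segment a b"
    have qh: "q \<in> convex hull X"
      using closed_segment_subset_convex_hull[OF hull_inc[OF assms(3)] hull_inc[OF assms(4)]] q by blast
    obtain t where t: "q = (1 - t) *\<^sub>R a + t *\<^sub>R b" using q unfolding in_segment by blast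
    have "v \<bullet> q = (1 - t) * (v \<bullet> a) + t * (v \<bullet> b)" using t by (simp add: inner_add_right)
    then have "v \<bullet> q = v \<bullet> a" using assms(7) by (simp add: algebra_simps)
    then show "q \<in> frontier (convex hull X)"
      using frontier_by_support[OF assms(1,2) qh] assms(6) by simp
  qed
  have side: "is_side X a b" unfolding is_side_def using assms(3,4,5,8) seg by blast
  have "infdist s (affine hull {a, b}) \<le> infdist c (affine hull {a, b})" if s: "s \<in> X" for s
  proof -
    have "\<bar>v \<bullet> s - v \<bullet> a\<bar> \<le> \<bar>v \<bullet> c - v \<bullet> a\<bar>"
      using assms(6,10) s assms(9) by fastforce
    then show ?thesis unfolding infdist_line[OF assms(5,2) assms(7)[symmetric]]
      by (simp add: divide_right_mono)
  qed
  then show ?thesis unfolding tallest_triangle_def using side assms(9) by blast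
qed

lemma tallest_nondeg:
  assumes "tallest_triangle X a b c" "\<not> collinear X"
  shows "\<not> collinear {a, b, c}"
proof
  assume col: "collinear {a, b, c}"
  have ab: "a \<noteq> b" "a \<in> X" "b \<in> X" using assms(1) unfolding tallest_triangle_def is_side_def by auto
  let ?L = "affine hull {a, b}"
  have "c \<in> ?L" using collinear_3_imp_in_affine_hull[OF col ab(1)] .
  then have "infdist c ?L = 0" by simp
  then have "\<forall>s\<in>X. infdist s ?L = 0"
    using assms(1) infdist_nonneg unfolding tallest_triangle_def by (metis order_antisym)
  moreover have "?L \<noteq> {}" using hull_inc[of a "{a,b}"] by blast
  ultimately have "X \<subseteq> ?L" using in_closed_iff_infdist_zero[OF closed_affine_hull] by blast
  then have "collinear X" unfolding collinear_affine_hull by blast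
  then show False using assms(2) by simp
qed




lemma side_nbr:
  assumes "finite (X::point set)" "v \<noteq> 0" "a \<in> X" "s0 \<in> X" "s0 \<noteq> a" "v \<bullet> s0 = v \<bullet> a"
  shows "\<exists>b\<in>X. b \<noteq> a \<and> v \<bullet> b = v \<bullet> a \<and> X \<inter> open_segment a b = {}"
proof -
  let ?e = "perp2 v"
  have "perp2 v \<bullet> (s0 - a) \<noteq> 0"
  proof
    assume "perp2 v \<bullet> (s0 - a) = 0"
    moreover have "v \<bullet> (s0 - a) = 0" using assms(6) by (simp add: inner_diff_right)
    ultimately have "s0 - a = 0" using orth_zero[OF assms(2)] by blast
    then show False using assms(5) by simp
  qed
  then obtain e where e: "0 < e \<bullet> (s0 - a)" "e = ?e \<or> e = - ?e"
    by (metis inner_minus_left neg_0_less_iff_less linorder_neqE_linordered_idom)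
  define S where "S = {s\<in>X. v \<bullet> s = v \<bullet> a \<and> 0 < e \<bullet> (s - a)}"
  have "s0 \<in> S" using assms(4,6) e(1) by (simp add: S_def)
  then obtain b where b: "b \<in> S" "X \<inter> open_segment a b = {}"
    using consec[OF assms(1,3) S_def] by blast
  then show ?thesis unfolding S_def by force
qed

lemma tri_at_max:
  assumes "finite X" "u \<noteq> 0" "x \<in> X" "y \<in> X" "\<forall>s\<in>X. u \<bullet> s \<le> u \<bullet> x" "\<forall>s\<in>X. u \<bullet> y \<le> u \<bullet> s"
    "s0 \<in> X" "s0 \<noteq> x" "u \<bullet> s0 = u \<bullet> x"
  shows "\<exists>b. tallest_triangle X x b y"
proof -
  obtain b where b: "b \<in> X" "b \<noteq> x" "u \<bullet> b = u \<bullet> x" "X \<inter> open_segment x b = {}"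
    using side_nbr[OF assms(1,2,3,7,8,9)] by blast
  show ?thesis using tallest_from_dir[OF assms(1,2,3) b(1) b(2)[symmetric] assms(5) b(3) b(4) assms(4,6)]
    by blast
qed

lemma pair_lemma:
  assumes "finite X" "\<not> collinear X" "v \<noteq> 0" "x \<in> X" "y \<in> X"
    "\<forall>s\<in>X. v \<bullet> s \<le> v \<bullet> x" "\<forall>s\<in>X. v \<bullet> y \<le> v \<bullet> s"
  shows "\<exists>a b c. tallest_triangle X a b c \<and> x \<in> {a,b,c} \<and> y \<in> {a,b,c}"
proof -
  have gen: "\<exists>a b c. tallest_triangle X a b c \<and> x \<in> {a,b,c} \<and> y \<in> {a,b,c}"
    if u: "u \<noteq> 0" "\<forall>s\<in>X. u \<bullet> s \<le> u \<bullet> x" "\<forall>s\<in>X. u \<bullet> y \<le> u \<bullet> s"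
      and ev: "(\<exists>s\<in>X. s \<noteq> x \<and> u \<bullet> s = u \<bullet> x) \<or> (\<exists>s\<in>X. s \<noteq> y \<and> u \<bullet> s = u \<bullet> y)" for u
  proof -
    from ev show ?thesis
    proof
      assume "\<exists>s\<in>X. s \<noteq> x \<and> u \<bullet> s = u \<bullet> x"
      then obtain s0 where "s0 \<in> X" "s0 \<noteq> x" "u \<bullet> s0 = u \<bullet> x" by blast
      then obtain b where "tallest_triangle X x b y"
        using tri_at_max[OF assms(1) u(1) assms(4,5) u(2,3)] by blast
      then show ?thesis by blast
    next
      assume "\<exists>s\<in>X. s \<noteq> y \<and> u \<bullet> s = u \<bullet> y"
      then obtain s0 where "s0 \<in> X" "s0 \<noteq> y" "(-u) \<bullet> s0 = (-u) \<bullet> y" by auto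
      moreover have "-u \<noteq> 0" "\<forall>s\<in>X. (-u) \<bullet> s \<le> (-u) \<bullet> y" "\<forall>s\<in>X. (-u) \<bullet> x \<le> (-u) \<bullet> s"
        using u by auto
      ultimately obtain b where "tallest_triangle X y b x"
        using tri_at_max[OF assms(1) _ assms(5,4)] by blast
      then show ?thesis by blast
    qed
  qed
  show ?thesis
  proof (cases "(\<exists>s\<in>X. s \<noteq> x \<and> v \<bullet> s = v \<bullet> x) \<or> (\<exists>s\<in>X. s \<noteq> y \<and> v \<bullet> s = v \<bullet> y)")
    case True
    then show ?thesis using gen[OF assms(3,6,7)] by blast
  next
    case False
    then have sx: "\<And>s. s \<in> X \<Longrightarrow> s \<noteq> x \<Longrightarrow> v \<bullet> (s - x) < 0"
      and sy: "\<And>s. s \<in> X \<Longrightarrow> s \<noteq> y \<Longrightarrow> v \<bullet> (s - y) > 0"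
      using assms(6,7) by (fastforce simp: inner_diff_right)+
    define w where "w = perp2 v"
    have wv: "v \<bullet> w = 0" "w \<noteq> 0" using assms(3) by (simp_all add: w_def perp2_nz)
    define Ev where "Ev = {t. \<exists>s\<in>X. (s \<noteq> x \<and> (v + t *\<^sub>R w) \<bullet> (s - x) = 0) \<or> (s \<noteq> y \<and> (v + t *\<^sub>R w) \<bullet> (s - y) = 0)}"
    have Ev_sub: "Ev \<subseteq> (\<lambda>s. - (v \<bullet> (s - x)) / (w \<bullet> (s - x))) ` X \<union> (\<lambda>s. - (v \<bullet> (s - y)) / (w \<bullet> (s - y))) ` X"
    proof
      fix t assume "t \<in> Ev"
      then obtain s where s: "s \<in> X" "(s \<noteq> x \<and> (v + t *\<^sub>R w) \<bullet> (s - x) = 0) \<or> (s \<noteq> y \<and> (v + t *\<^sub>R w) \<bullet> (s - y) = 0)"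
        unfolding Ev_def by blast
      from s(2) show "t \<in> (\<lambda>s. - (v \<bullet> (s - x)) / (w \<bullet> (s - x))) ` X \<union> (\<lambda>s. - (v \<bullet> (s - y)) / (w \<bullet> (s - y))) ` X"
      proof
        assume h: "s \<noteq> x \<and> (v + t *\<^sub>R w) \<bullet> (s - x) = 0"
        then have e: "v \<bullet> (s - x) + t * (w \<bullet> (s - x)) = 0" by (simp add: inner_add_left)
        have "v \<bullet> (s - x) < 0" using sx s(1) h by blast
        then have "w \<bullet> (s - x) \<noteq> 0" using e by auto
        then have "t = - (v \<bullet> (s - x)) / (w \<bullet> (s - x))" using e by (simp add: field_simps)
        then show ?thesis using s(1) by blast
      next
        assume h: "s \<noteq> y \<and> (v + t *\<^sub>R w) \<bullet> (s - y) = 0"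
        then have e: "v \<bullet> (s - y) + t * (w \<bullet> (s - y)) = 0" by (simp add: inner_add_left)
        have "v \<bullet> (s - y) > 0" using sy s(1) h by blast
        then have "w \<bullet> (s - y) \<noteq> 0" using e by auto
        then have "t = - (v \<bullet> (s - y)) / (w \<bullet> (s - y))" using e by (simp add: field_simps)
        then show ?thesis using s(1) by blast
      qed
    qed
    have fin: "finite Ev" using finite_subset[OF Ev_sub] assms(1) by simp
    obtain s1 where s1: "s1 \<in> X" "w \<bullet> (s1 - x) \<noteq> 0"
    proof -
      have "\<not> (\<forall>p\<in>X. w \<bullet> (p - x) = 0)" using orth_collinear[OF wv(2)] assms(2) by blast
      then show ?thesis using that by blast
    qed
    have "s1 \<noteq> x" using s1 by auto
    define t1 where "t1 = - (v \<bullet> (s1 - x)) / (w \<bullet> (s1 - x))"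
    have "(v + t1 *\<^sub>R w) \<bullet> (s1 - x) = v \<bullet> (s1 - x) + t1 * (w \<bullet> (s1 - x))"
      by (simp add: inner_add_left)
    also have "\<dots> = 0" using s1(2) by (simp add: t1_def)
    finally have "(v + t1 *\<^sub>R w) \<bullet> (s1 - x) = 0" .
    then have "t1 \<in> Ev" unfolding Ev_def using s1(1) \<open>s1 \<noteq> x\<close> by blast
    then have ne: "Ev \<noteq> {}" by blast
    define m where "m = Min (abs ` Ev)"
    have "m \<in> abs ` Ev" unfolding m_def using fin ne by (intro Min_in) auto
    then obtain t0 where t0: "t0 \<in> Ev" "\<bar>t0\<bar> = m" by auto
    have tmin: "\<bar>t0\<bar> \<le> \<bar>t\<bar>" if "t \<in> Ev" for t
      unfolding t0(2) m_def using fin that by (intro Min_le) auto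
    have "0 \<notin> Ev" unfolding Ev_def using sx sy by fastforce
    then have t0nz: "t0 \<noteq> 0" using t0(1) by auto
    define u0 where "u0 = v + t0 *\<^sub>R w"
    have u0nz: "u0 \<noteq> 0"
    proof
      assume "u0 = 0"
      then have "v \<bullet> u0 = 0" by simp
      then have "v \<bullet> v = 0" using wv by (simp add: u0_def inner_add_right)
      then show False using assms(3) by simp
    qed
    have affine_root: "\<exists>t1. \<bar>t1\<bar> < \<bar>t0\<bar> \<and> al + t1 * be = 0"
      if "al < 0" "al + t0 * be > 0" for al be :: real
    proof -
      have pb: "t0 * be > - al" "- al > 0" using that by auto
      then have "be \<noteq> 0" by auto
      define r where "r = (- al) / (t0 * be)"
      have d: "t0 * be > 0" using pb by linarith
      have r0: "0 < r" unfolding r_def using pb d by (intro divide_pos_pos) auto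
      have "(-al)/(t0*be) < (t0*be)/(t0*be)" using pb(1) d by (intro divide_strict_right_mono) auto
      moreover have "(t0*be)/(t0*be) = 1" using d by (intro divide_self) linarith
      ultimately have r1: "r < 1" unfolding r_def by linarith
      note r = r0 r1
      have "al + (r * t0) * be = 0" using pb t0nz \<open>be \<noteq> 0\<close> by (simp add: r_def field_simps)
      moreover have "\<bar>r * t0\<bar> < \<bar>t0\<bar>" using r t0nz by (simp add: abs_mult)
      ultimately show ?thesis by blast
    qed
    have A: "\<forall>s\<in>X. u0 \<bullet> s \<le> u0 \<bullet> x"
    proof
      fix s assume s: "s \<in> X"
      show "u0 \<bullet> s \<le> u0 \<bullet> x"
      proof (cases "s = x")
        case False
        show ?thesis
        proof (rule ccontr)
          assume "\<not> ?thesis"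
          then have "v \<bullet> (s - x) + t0 * (w \<bullet> (s - x)) > 0"
            by (simp add: u0_def inner_add_left inner_diff_right algebra_simps)
          then obtain t1 where t1: "\<bar>t1\<bar> < \<bar>t0\<bar>" "v \<bullet> (s - x) + t1 * (w \<bullet> (s - x)) = 0"
            using affine_root[of "v \<bullet> (s - x)" "w \<bullet> (s - x)"] sx[OF s False] by blast
          then have "t1 \<in> Ev" unfolding Ev_def using s False by (auto simp: inner_add_left)
          then show False using tmin t1(1) by fastforce
        qed
      qed simp
    qed
    have B: "\<forall>s\<in>X. u0 \<bullet> y \<le> u0 \<bullet> s"
    proof
      fix s assume s: "s \<in> X"
      show "u0 \<bullet> y \<le> u0 \<bullet> s"
      proof (cases "s = y")
        case False
        show ?thesis
        proof (rule ccontr)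
          assume "\<not> ?thesis"
          then have "(- (v \<bullet> (s - y))) + t0 * (- (w \<bullet> (s - y))) > 0"
            by (simp add: u0_def inner_add_left inner_diff_right algebra_simps)
          then obtain t1 where t1: "\<bar>t1\<bar> < \<bar>t0\<bar>" "(- (v \<bullet> (s - y))) + t1 * (- (w \<bullet> (s - y))) = 0"
            using affine_root[of "- (v \<bullet> (s - y))" "- (w \<bullet> (s - y))"] sy[OF s False] by auto
          then have "(v + t1 *\<^sub>R w) \<bullet> (s - y) = 0" by (simp add: inner_add_left algebra_simps)
          then have "t1 \<in> Ev" unfolding Ev_def using s False by blast
          then show False using tmin t1(1) by fastforce
        qed
      qed simp
    qed
    have "(\<exists>s\<in>X. s \<noteq> x \<and> u0 \<bullet> s = u0 \<bullet> x) \<or> (\<exists>s\<in>X. s \<noteq> y \<and> u0 \<bullet> s = u0 \<bullet> y)"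
      using t0(1) unfolding Ev_def u0_def by (auto simp: inner_diff_right)
    then show ?thesis using gen[OF u0nz A B] by blast
  qed
qed




lemma hull_lt: "(\<forall>s\<in>X. v \<bullet> s < c) \<Longrightarrow> y \<in> convex hull X \<Longrightarrow> v \<bullet> y < (c::real)"
proof -
  assume a: "\<forall>s\<in>X. v \<bullet> s < c" "y \<in> convex hull X"
  have "convex hull X \<subseteq> {y. v \<bullet> y < c}"
    by (rule hull_minimal) (use a(1) convex_halfspace_lt in auto)
  then show ?thesis using a(2) by blast
qed

lemma face_hull:
  assumes "finite X" "k \<in> convex hull X" "\<forall>s\<in>X. c \<le> v \<bullet> s" "v \<bullet> k = c"
  shows "k \<in> convex hull {s\<in>X. v \<bullet> s = c}"
proof -
  obtain mu where mu: "\<forall>s\<in>X. 0 \<le> mu s" "sum mu X = 1" "(\<Sum>s\<in>X. mu s *\<^sub>R s) = k"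
    using assms(2) unfolding convex_hull_finite[OF assms(1)] by blast
  let ?Y = "{s\<in>X. v \<bullet> s = c}"
  have "(\<Sum>s\<in>X. mu s * (v \<bullet> s - c)) = v \<bullet> k - c"
  proof -
    have "(\<Sum>s\<in>X. mu s * (v \<bullet> s - c)) = (\<Sum>s\<in>X. mu s * (v \<bullet> s)) - (\<Sum>s\<in>X. mu s) * c"
      by (simp add: algebra_simps sum_subtractf sum_distrib_right sum_distrib_left)
    also have "(\<Sum>s\<in>X. mu s * (v \<bullet> s)) = v \<bullet> k"
      unfolding mu(3)[symmetric] by (simp add: inner_sum_right)
    finally show ?thesis using mu(2) by simp
  qed
  then have s0: "(\<Sum>s\<in>X. mu s * (v \<bullet> s - c)) = 0" using assms(4) by simp
  have nn: "\<forall>s\<in>X. 0 \<le> mu s * (v \<bullet> s - c)" using mu(1) assms(3) by simp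
  have z: "\<forall>s\<in>X. mu s * (v \<bullet> s - c) = 0" using sum_nonneg_eq_0_iff[OF assms(1), of "\<lambda>s. mu s * (v \<bullet> s - c)"] nn s0 by simp
  have z2: "mu s = 0" if "s \<in> X - ?Y" for s
  proof -
    have "v \<bullet> s - c \<noteq> 0" using that by auto
    then show ?thesis using z that by auto
  qed
  have fY: "finite ?Y" using assms(1) by simp
  have "sum mu ?Y = sum mu X"
    by (rule sum.mono_neutral_left) (use assms(1) z2 in auto)
  moreover have "(\<Sum>s\<in>?Y. mu s *\<^sub>R s) = (\<Sum>s\<in>X. mu s *\<^sub>R s)"
    by (rule sum.mono_neutral_left) (use assms(1) z2 in auto)
  ultimately have m2: "sum mu ?Y = 1" "(\<Sum>s\<in>?Y. mu s *\<^sub>R s) = k" using mu(2,3) by simp_all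
  have m1: "\<forall>s\<in>?Y. 0 \<le> mu s" using mu(1) by simp
  show ?thesis unfolding convex_hull_finite[OF fY] using m1 m2 by blast
qed

lemma exists_neg_side:
  assumes "finite X" "\<forall>s\<in>X. v \<bullet> s \<le> v \<bullet> x"
    "\<And>u. (\<forall>s\<in>X. u \<bullet> s \<le> u \<bullet> x) \<Longrightarrow> 0 \<le> u \<bullet> d" "v \<bullet> d = 0" "d \<noteq> 0"
  shows "\<exists>w\<in>X. v \<bullet> w = v \<bullet> x \<and> d \<bullet> (w - x) < 0"
proof (rule ccontr)
  assume "\<not> ?thesis"
  then have side: "\<And>w. w \<in> X \<Longrightarrow> v \<bullet> w = v \<bullet> x \<Longrightarrow> 0 \<le> d \<bullet> (w - x)" by force
  define R where "R = {s\<in>X. v \<bullet> s < v \<bullet> x}"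
  define F where "F = insert 1 ((\<lambda>s. v \<bullet> (x - s) / (\<bar>d \<bullet> (x - s)\<bar> + 1)) ` R)"
  define ep where "ep = Min F"
  have fF: "finite F" "F \<noteq> {}" using assms(1) by (auto simp: F_def R_def)
  have Fpos: "\<forall>f\<in>F. f > 0"
  proof
    fix f assume "f \<in> F"
    then show "f > 0" unfolding F_def R_def
      by (auto simp: inner_diff_right intro!: divide_pos_pos)
  qed
  have ep: "ep > 0" unfolding ep_def using fF Fpos Min_in by blast
  have epR: "ep * (\<bar>d \<bullet> (x - s)\<bar> + 1) \<le> v \<bullet> (x - s)" if "s \<in> R" for s
  proof -
    have "ep \<le> v \<bullet> (x - s) / (\<bar>d \<bullet> (x - s)\<bar> + 1)"
      unfolding ep_def using fF that by (intro Min_le) (auto simp: F_def)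
    then show ?thesis by (simp add: le_divide_eq add_pos_nonneg)
  qed
  define u where "u = v - ep *\<^sub>R d"
  have "\<forall>s\<in>X. u \<bullet> s \<le> u \<bullet> x"
  proof
    fix s assume s: "s \<in> X"
    show "u \<bullet> s \<le> u \<bullet> x"
    proof (cases "v \<bullet> s = v \<bullet> x")
      case True
      then have "0 \<le> d \<bullet> (s - x)" using side s by blast
      then have "0 \<le> ep * (d \<bullet> (s - x))" using ep by simp
      then show ?thesis using True by (simp add: u_def inner_diff_left inner_diff_right algebra_simps)
    next
      case False
      then have sR: "s \<in> R" using s assms(2) by (auto simp: R_def)
      have "ep * (d \<bullet> (x - s)) \<le> ep * \<bar>d \<bullet> (x - s)\<bar>"
      proof -
        have "d \<bullet> (x - s) \<le> \<bar>d \<bullet> (x - s)\<bar>" by simp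
        then show ?thesis using ep by simp
      qed
      also have "\<dots> \<le> v \<bullet> (x - s)" using epR[OF sR] ep by (simp add: algebra_simps)
      finally show ?thesis by (simp add: u_def inner_diff_left inner_diff_right algebra_simps)
    qed
  qed
  then have "0 \<le> u \<bullet> d" by (rule assms(3))
  moreover have "u \<bullet> d = - ep * (d \<bullet> d)" using assms(4) by (simp add: u_def inner_diff_left)
  moreover have "d \<bullet> d > 0" using assms(5) by simp
  moreover have "ep * (d \<bullet> d) > 0" using ep \<open>d \<bullet> d > 0\<close> by (rule mult_pos_pos)
  ultimately show False by linarith
qed



lemma between:
  assumes "finite (X::point set)" "(v::point) \<noteq> 0" "k \<notin> X" "v \<bullet> k = c" "k \<in> convex hull {s\<in>X. v \<bullet> s = c}"
  shows "\<exists>y1 y2 th. y1 \<in> X \<and> y2 \<in> X \<and> v \<bullet> y1 = c \<and> v \<bullet> y2 = c \<and> y1 \<noteq> y2 \<and>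
           X \<inter> open_segment y1 y2 = {} \<and> 0 < th \<and> th < 1 \<and> k = (1 - th) *\<^sub>R y1 + th *\<^sub>R y2"
proof -
  let ?Y = "{s\<in>X. v \<bullet> s = c}"
  define e where "e = perp2 (v::point)"
  have ne0: "e \<bullet> (s - k) \<noteq> 0" if "s \<in> ?Y" for s
  proof
    assume h0: "e \<bullet> (s - k) = 0"
    have h1: "v \<bullet> (s - k) = 0" using that assms(4) by (simp add: inner_diff_right)
    have h2: "perp2 v \<bullet> (s - k) = 0" using h0 unfolding e_def .
    have "s - k = 0" by (rule orth_zero[OF assms(2) h1 h2])
    then show False using that assms(3) by auto
  qed
  define Sp where "Sp = {s\<in>?Y. 0 < e \<bullet> (s - k)}"
  define Sm where "Sm = {s\<in>?Y. e \<bullet> (s - k) < 0}"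
  have "Sp \<noteq> {}"
  proof
    assume "Sp = {}"
    have "e \<bullet> s < e \<bullet> k" if "s \<in> ?Y" for s
    proof -
      have "\<not> 0 < e \<bullet> (s - k)" using that \<open>Sp = {}\<close> unfolding Sp_def by blast
      moreover have "e \<bullet> (s - k) \<noteq> 0" using ne0[OF that] .
      ultimately have "e \<bullet> (s - k) < 0" by linarith
      then show ?thesis by (simp add: inner_diff_right)
    qed
    then have "\<forall>s\<in>?Y. e \<bullet> s < e \<bullet> k" by blast
    then have "e \<bullet> k < e \<bullet> k" using hull_lt assms(5) by blast
    then show False by simp
  qed
  have "Sm \<noteq> {}"
  proof
    assume "Sm = {}"
    have "(-e) \<bullet> s < (-e) \<bullet> k" if "s \<in> ?Y" for s
    proof -
      have "\<not> e \<bullet> (s - k) < 0" using that \<open>Sm = {}\<close> unfolding Sm_def by blast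
      moreover have "e \<bullet> (s - k) \<noteq> 0" using ne0[OF that] .
      ultimately have "e \<bullet> (s - k) > 0" by linarith
      then show ?thesis by (simp add: inner_diff_right)
    qed
    then have "\<forall>s\<in>?Y. (-e) \<bullet> s < (-e) \<bullet> k" by blast
    then have "(-e) \<bullet> k < (-e) \<bullet> k" using hull_lt assms(5) by blast
    then show False by simp
  qed
  have fp: "finite Sp" "finite Sm" using assms(1) by (auto simp: Sp_def Sm_def)
  define mp where "mp = Min ((\<lambda>s. e \<bullet> (s - k)) ` Sp)"
  define mm where "mm = Max ((\<lambda>s. e \<bullet> (s - k)) ` Sm)"
  have "mp \<in> (\<lambda>s. e \<bullet> (s - k)) ` Sp" unfolding mp_def using fp \<open>Sp \<noteq> {}\<close> by (intro Min_in) auto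
  then obtain y2 where y2: "y2 \<in> Sp" "e \<bullet> (y2 - k) = mp" by auto
  have "mm \<in> (\<lambda>s. e \<bullet> (s - k)) ` Sm" unfolding mm_def using fp \<open>Sm \<noteq> {}\<close> by (intro Max_in) auto
  then obtain y1 where y1: "y1 \<in> Sm" "e \<bullet> (y1 - k) = mm" by auto
  have mpl: "mp \<le> e \<bullet> (s - k)" if "s \<in> Sp" for s unfolding mp_def using fp that by (intro Min_le) auto
  have mml: "e \<bullet> (s - k) \<le> mm" if "s \<in> Sm" for s unfolding mm_def using fp that by (intro Max_ge) auto
  have p1: "e \<bullet> (y1 - k) < 0" "y1 \<in> X" "v \<bullet> y1 = c" using y1(1) by (auto simp: Sm_def)
  have p2: "e \<bullet> (y2 - k) > 0" "y2 \<in> X" "v \<bullet> y2 = c" using y2(1) by (auto simp: Sp_def)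
  have ne: "y1 \<noteq> y2" using p1 p2 by auto
  have seg: "X \<inter> open_segment y1 y2 = {}"
  proof (rule ccontr)
    assume "X \<inter> open_segment y1 y2 \<noteq> {}"
    then obtain q where q: "q \<in> X" "q \<in> open_segment y1 y2" by blast
    then obtain t where t: "0 < t" "t < 1" "q = (1 - t) *\<^sub>R y1 + t *\<^sub>R y2" unfolding in_segment by blast
    have "v \<bullet> q = (1 - t) * (v \<bullet> y1) + t * (v \<bullet> y2)" using t(3) by (simp add: inner_add_right)
    then have vq: "v \<bullet> q = c" using p1 p2 by (simp add: algebra_simps)
    have eq0: "e \<bullet> q = (1 - t) * (e \<bullet> y1) + t * (e \<bullet> y2)" using t(3) by (simp add: inner_add_right)
    have eq1: "e \<bullet> (q - k) = e \<bullet> q - e \<bullet> k" "e \<bullet> (y1 - k) = e \<bullet> y1 - e \<bullet> k"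
      "e \<bullet> (y2 - k) = e \<bullet> y2 - e \<bullet> k" by (simp_all add: inner_diff_right)
    have eq2: "(1 - t) * (A - K) + t * (B - K) = (1 - t) * A + t * B - K" for A B K :: real
      by (simp add: algebra_simps)
    have eq: "e \<bullet> (q - k) = (1 - t) * (e \<bullet> (y1 - k)) + t * (e \<bullet> (y2 - k))"
      unfolding eq1 eq0 eq2 ..
    have qY: "q \<in> ?Y" using q(1) vq by simp
    consider "e \<bullet> (q - k) > 0" | "e \<bullet> (q - k) < 0" using ne0[OF qY] by linarith
    then show False
    proof cases
      case 1
      then have "q \<in> Sp" using qY by (simp add: Sp_def)
      then have "e \<bullet> (y2 - k) \<le> e \<bullet> (q - k)" using mpl y2(2) by metis
      moreover have "(1 - t) * (e \<bullet> (y1 - k)) < 0" using t p1 by (simp add: mult_pos_neg)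
      moreover have "t * (e \<bullet> (y2 - k)) \<le> e \<bullet> (y2 - k)" using t p2 by (simp add: mult_left_le_one_le)
      ultimately show False using eq by linarith
    next
      case 2
      then have "q \<in> Sm" using qY by (simp add: Sm_def)
      then have "e \<bullet> (q - k) \<le> e \<bullet> (y1 - k)" using mml y1(2) by metis
      moreover have "t * (e \<bullet> (y2 - k)) > 0" using t p2 by simp
      moreover have "(1 - t) * (e \<bullet> (y1 - k)) \<ge> e \<bullet> (y1 - k)"
      proof -
        have "t * (e \<bullet> (y1 - k)) \<le> 0" using t p1 by (simp add: mult_nonneg_nonpos)
        then show ?thesis by (simp add: algebra_simps)
      qed
      ultimately show False using eq by linarith
    qed
  qed
  define th where "th = (e \<bullet> (k - y1)) / (e \<bullet> (y2 - y1))"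
  have e1: "e \<bullet> (k - y1) > 0" using p1 by (simp add: inner_diff_right)
  have e2: "e \<bullet> (y2 - y1) = e \<bullet> (y2 - k) + e \<bullet> (k - y1)" by (simp add: inner_diff_right)
  have e3: "e \<bullet> (y2 - y1) > 0" using e1 e2 p2 by linarith
  have th0: "0 < th" unfolding th_def using e1 e3 by simp
  have th1: "th < 1" unfolding th_def using e1 e2 e3 p2 by (simp add: divide_less_eq)
  have "v \<bullet> (y2 - y1) = 0" "v \<bullet> (k - y1) = 0" using p1 p2 assms(4) by (simp_all add: inner_diff_right)
  moreover have "y2 - y1 \<noteq> 0" using ne by simp
  ultimately have kr: "k - y1 = (((y2 - y1) \<bullet> (k - y1)) / ((y2 - y1) \<bullet> (y2 - y1))) *\<^sub>R (y2 - y1)"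
    using par[OF assms(2)] by blast
  define r where "r = ((y2 - y1) \<bullet> (k - y1)) / ((y2 - y1) \<bullet> (y2 - y1))"
  have kr': "k - y1 = r *\<^sub>R (y2 - y1)" using kr unfolding r_def .
  have "e \<bullet> (k - y1) = r * (e \<bullet> (y2 - y1))" unfolding kr' by simp
  then have "r = th" unfolding th_def using e3 by simp
  have "k = y1 + (k - y1)" by simp
  also have "\<dots> = y1 + th *\<^sub>R (y2 - y1)" unfolding kr' \<open>r = th\<close> ..
  also have "\<dots> = (1 - th) *\<^sub>R y1 + th *\<^sub>R y2" by (simp add: scaleR_diff_left scaleR_diff_right)
  finally have kk: "k = (1 - th) *\<^sub>R y1 + th *\<^sub>R y2" .
  show ?thesis
    apply (rule exI[of _ y1], rule exI[of _ y2], rule exI[of _ th])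
    using p1(2,3) p2(2,3) ne seg th0 th1 kk by (intro conjI) assumption+
qed



lemma bad_pair:
  assumes "\<not> collinear T" "x \<in> T" "k \<in> T" "z - x = lam *\<^sub>R (k - x)" "lam < 1"
  shows "\<not> good T x z"
proof
  assume "good T x z"
  then obtain u where u: "u \<noteq> 0" "\<forall>s\<in>T. u \<bullet> z \<le> u \<bullet> s \<and> u \<bullet> s \<le> u \<bullet> x"
    unfolding good_def by blast
  have uz: "u \<bullet> z = u \<bullet> x + lam * (u \<bullet> (k - x))"
  proof -
    have "u \<bullet> (z - x) = lam * (u \<bullet> (k - x))" using assms(4) by simp
    then show ?thesis by (simp add: inner_diff_right)
  qed
  have a: "u \<bullet> (k - x) \<le> 0" "u \<bullet> z \<le> u \<bullet> k" using u(2) assms(3) by (auto simp: inner_diff_right)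
  have "(1 - lam) * (u \<bullet> (k - x)) \<ge> 0" using a uz by (simp add: algebra_simps inner_diff_right)
  then have "u \<bullet> (k - x) \<ge> 0" using assms(5) by (simp add: zero_le_mult_iff)
  then have "u \<bullet> (k - x) = 0" using a by simp
  then have "u \<bullet> z = u \<bullet> x" using uz by simp
  have "u \<bullet> (p - x) = 0" if "p \<in> T" for p
  proof -
    have "u \<bullet> z \<le> u \<bullet> p \<and> u \<bullet> p \<le> u \<bullet> x" using u(2) that by blast
    then have "u \<bullet> p = u \<bullet> x" using \<open>u \<bullet> z = u \<bullet> x\<close> by linarith
    then show ?thesis by (simp add: inner_diff_right)
  qed
  then have "\<forall>p\<in>T. u \<bullet> (p - x) = 0" by blast
  then show False using orth_collinear[OF u(1)] assms(1) by blast
qed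




lemma core_min:
  assumes "finite X" "convex_position X" "\<not> collinear X" "x \<in> X" "\<not> good X x z"
  obtains v m where "v \<noteq> 0" "\<forall>s\<in>X. v \<bullet> s \<le> v \<bullet> x" "0 < m"
    "\<And>u. (\<forall>s\<in>X. u \<bullet> s \<le> u \<bullet> x) \<Longrightarrow> m * (u \<bullet> x - gmin X u) \<le> u \<bullet> z - gmin X u"
    "v \<bullet> z - gmin X v = m * (v \<bullet> x - gmin X v)"
proof -
  have Xne: "X \<noteq> {}" using assms(4) by blast
  define N where "N = {u. \<forall>s\<in>X. u \<bullet> s \<le> u \<bullet> x}"
  define N1 where "N1 = N \<inter> sphere 0 1"
  have wpos: "gmin X u < u \<bullet> x" if "u \<noteq> 0" "u \<in> N" for u
  proof (rule ccontr)
    assume "\<not> gmin X u < u \<bullet> x"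
    then have ge: "u \<bullet> x \<le> gmin X u" by simp
    have "u \<bullet> (p - x) = 0" if "p \<in> X" for p
    proof -
      have "gmin X u \<le> u \<bullet> p" using gmin_le[OF assms(1) that] .
      moreover have "u \<bullet> p \<le> u \<bullet> x" using \<open>u \<in> N\<close> that by (simp add: N_def)
      ultimately show ?thesis using ge by (simp add: inner_diff_right)
    qed
    then have "collinear X" using orth_collinear[OF \<open>u \<noteq> 0\<close>] by blast
    then show False using assms(3) by simp
  qed
  have zpos: "gmin X u < u \<bullet> z" if "u \<noteq> 0" "u \<in> N" for u
  proof -
    have "\<not> (\<forall>s\<in>X. u \<bullet> z \<le> u \<bullet> s \<and> u \<bullet> s \<le> u \<bullet> x)" using assms(5) that(1) unfolding good_def by blast
    then obtain s where s: "s \<in> X" "\<not> (u \<bullet> z \<le> u \<bullet> s \<and> u \<bullet> s \<le> u \<bullet> x)" by blast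
    have "u \<bullet> s \<le> u \<bullet> x" using that(2) s(1) by (simp add: N_def)
    then have "u \<bullet> s < u \<bullet> z" using s(2) by linarith
    moreover have "gmin X u \<le> u \<bullet> s" using gmin_le[OF assms(1) s(1)] .
    ultimately show ?thesis by linarith
  qed
  have N1ne: "N1 \<noteq> {}"
  proof -
    have "x \<in> frontier (convex hull X)" using assms(2,4) unfolding convex_position_def by blast
    then have "x \<notin> interior (convex hull X)" by (simp add: frontier_def)
    moreover have "x \<in> convex hull X" using assms(4) by (rule hull_inc)
    ultimately obtain a where a: "a \<noteq> 0" "\<forall>y\<in>convex hull X. a \<bullet> y \<le> a \<bullet> x"
      using support_exists[OF convex_convex_hull] by blast
    define a1 where "a1 = (1 / norm a) *\<^sub>R a"
    have "norm a1 = 1" using a(1) by (simp add: a1_def)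
    moreover have "a1 \<in> N"
    proof -
      have "a1 \<bullet> s \<le> a1 \<bullet> x" if "s \<in> X" for s
      proof -
        have "a \<bullet> s \<le> a \<bullet> x" using a(2) hull_inc[OF that] by blast
        then show ?thesis using a(1) by (simp add: a1_def divide_right_mono)
      qed
      then show ?thesis by (simp add: N_def)
    qed
    ultimately have "a1 \<in> N1" by (simp add: N1_def)
    then show ?thesis by blast
  qed
  have Neq: "N = (\<Inter>s\<in>X. {u. (s - x) \<bullet> u \<le> 0})"
  proof -
    have e: "(s - x) \<bullet> u = u \<bullet> s - u \<bullet> x" for s u :: point
      by (metis inner_commute inner_diff_right)
    have "(\<forall>s\<in>X. u \<bullet> s \<le> u \<bullet> x) \<longleftrightarrow> (\<forall>s\<in>X. (s - x) \<bullet> u \<le> 0)" for u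
      unfolding e by simp
    then show ?thesis unfolding N_def by blast
  qed
  have "closed N" unfolding Neq by (intro closed_INT) (simp add: closed_halfspace_le)
  then have cN1: "compact N1" unfolding N1_def using compact_sphere by (intro closed_Int_compact)
  define psi where "psi u = (u \<bullet> z - gmin X u) / (u \<bullet> x - gmin X u)" for u
  have den: "u \<bullet> x - gmin X u \<noteq> 0" if "u \<in> N1" for u
  proof -
    have "u \<noteq> 0" using that by (auto simp: N1_def)
    then show ?thesis using wpos that by (fastforce simp: N1_def)
  qed
  have "continuous_on N1 psi" unfolding psi_def
    by (intro continuous_intros gmin_cont[OF assms(1) Xne]) (use den in auto)
  then obtain v where v: "v \<in> N1" "\<And>u. u \<in> N1 \<Longrightarrow> psi v \<le> psi u"
    using continuous_attains_inf[OF cN1 N1ne] by blast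
  have vnz: "v \<noteq> 0" and vN: "v \<in> N" using v(1) by (auto simp: N1_def)
  define m where "m = psi v"
  have dv: "0 < v \<bullet> x - gmin X v" using wpos[OF vnz vN] by simp
  have nv: "0 < v \<bullet> z - gmin X v" using zpos[OF vnz vN] by simp
  have mpos: "0 < m" unfolding m_def psi_def using dv nv by simp
  have star: "m * (u \<bullet> x - gmin X u) \<le> u \<bullet> z - gmin X u" if "\<forall>s\<in>X. u \<bullet> s \<le> u \<bullet> x" for u
  proof (cases "u = 0")
    case True
    have "gmin X 0 = 0" using gmin_scale[OF assms(1) Xne, of 0 x] by simp
    then show ?thesis using True by simp
  next
    case False
    have uN: "u \<in> N" using that by (simp add: N_def)
    define c where "c = 1 / norm u"
    have c: "c > 0" using False by (simp add: c_def)
    define u1 where "u1 = c *\<^sub>R u"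
    have "u1 \<in> N"
    proof -
      have "u1 \<bullet> s \<le> u1 \<bullet> x" if "s \<in> X" for s
        using uN that c by (simp add: N_def u1_def mult_left_mono)
      then show ?thesis by (simp add: N_def)
    qed
    moreover have "norm u1 = 1" using False by (simp add: u1_def c_def)
    ultimately have "u1 \<in> N1" by (simp add: N1_def)
    then have "m \<le> psi u1" using v(2) by (simp add: m_def)
    also have "psi u1 = psi u"
    proof -
      have g: "gmin X u1 = c * gmin X u" unfolding u1_def using gmin_scale[OF assms(1) Xne] c by simp
      have "psi u1 = (c * (u \<bullet> z - gmin X u)) / (c * (u \<bullet> x - gmin X u))"
        unfolding psi_def g by (simp add: u1_def algebra_simps)
      then show ?thesis unfolding psi_def using c by simp
    qed
    finally have "m \<le> (u \<bullet> z - gmin X u) / (u \<bullet> x - gmin X u)" by (simp add: psi_def)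
    moreover have "0 < u \<bullet> x - gmin X u" using wpos[OF False uN] by simp
    ultimately show ?thesis by (simp add: pos_le_divide_eq)
  qed
  have eq: "v \<bullet> z - gmin X v = m * (v \<bullet> x - gmin X v)" unfolding m_def psi_def using dv by simp
  show ?thesis using that[OF vnz _ mpos star eq] vN by (simp add: N_def)
qed




lemma cone_dual:
  assumes "\<forall>s\<in>X. u \<bullet> s \<le> u \<bullet> x" "c \<in> convex_cone hull ((\<lambda>s. x - s) ` X)"
  shows "0 \<le> u \<bullet> (c::point)"
proof -
  have cc: "convex_cone {c::point. 0 \<le> u \<bullet> c}"
    unfolding convex_cone_def conic_def
  proof (intro conjI)
    have "(0::point) \<in> {c::point. 0 \<le> u \<bullet> c}" by simp
    then show "{c::point. 0 \<le> u \<bullet> c} \<noteq> {}" by blast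
    show "convex {c::point. 0 \<le> u \<bullet> c}" using convex_halfspace_ge[of 0 u] .
    show "\<forall>x c. x \<in> {c. 0 \<le> u \<bullet> c} \<longrightarrow> 0 \<le> c \<longrightarrow> c *\<^sub>R x \<in> {c. 0 \<le> u \<bullet> c}" by simp
  qed
  have "(\<lambda>s. x - s) ` X \<subseteq> {c. 0 \<le> u \<bullet> c}"
  proof
    fix c assume "c \<in> (\<lambda>s. x - s) ` X"
    then obtain s where "s \<in> X" "c = x - s" by blast
    then show "c \<in> {c. 0 \<le> u \<bullet> c}" using assms(1) by (simp add: inner_diff_right)
  qed
  then have "convex_cone hull ((\<lambda>s. x - s) ` X) \<subseteq> {c. 0 \<le> u \<bullet> c}"
    using cc by (rule hull_minimal)
  then show ?thesis using assms(2) by blast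
qed

lemma core_rep:
  assumes "finite X" "x \<in> X" "\<forall>s\<in>X. v \<bullet> s \<le> v \<bullet> x"
    "\<And>u. (\<forall>s\<in>X. u \<bullet> s \<le> u \<bullet> x) \<Longrightarrow> m * (u \<bullet> x - gmin X u) \<le> u \<bullet> z - gmin X u"
    "v \<bullet> z - gmin X v = m * (v \<bullet> x - gmin X v)" "lam = 1 - m"
  shows "\<exists>k d. k \<in> convex hull X \<and> v \<bullet> k = gmin X v \<and> (\<forall>u. (\<forall>s\<in>X. u \<bullet> s \<le> u \<bullet> x) \<longrightarrow> 0 \<le> u \<bullet> d)
     \<and> v \<bullet> d = 0 \<and> z - x = lam *\<^sub>R (k - x) + d \<and> (lam \<le> 0 \<longrightarrow> k \<in> X)"
proof -
  have Xne: "X \<noteq> {}" using assms(2) by blast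
  have lamid: "lam * (G - A) = (G - A) + m * (A - G)" for G A :: real
    unfolding assms(6) by (simp add: algebra_simps)
  have starl: "lam * (gmin X u - u \<bullet> x) \<le> u \<bullet> (z - x)" if "\<forall>s\<in>X. u \<bullet> s \<le> u \<bullet> x" for u
  proof -
    have h: "m * (u \<bullet> x - gmin X u) \<le> u \<bullet> z - gmin X u" by (rule assms(4)[OF that])
    show ?thesis unfolding lamid inner_diff_right using h by linarith
  qed
  have eql: "v \<bullet> (z - x) = lam * (gmin X v - v \<bullet> x)"
    unfolding lamid inner_diff_right using assms(5) by linarith
  show ?thesis
  proof (cases "lam \<le> 0")
    case True
    obtain y0 where y0: "y0 \<in> X" "gmin X v = v \<bullet> y0" using gmin_in[OF assms(1) Xne] by blast
    define d where "d = z - x - lam *\<^sub>R (y0 - x)"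
    have dual: "0 \<le> u \<bullet> d" if u: "\<forall>s\<in>X. u \<bullet> s \<le> u \<bullet> x" for u
    proof -
      have "gmin X u - u \<bullet> x \<le> u \<bullet> (y0 - x)" using gmin_le[OF assms(1) y0(1)] by (simp add: inner_diff_right)
      then have "lam * (u \<bullet> (y0 - x)) \<le> lam * (gmin X u - u \<bullet> x)" using True by (rule mult_left_mono_neg)
      then show ?thesis using starl[OF u] by (simp add: d_def inner_diff_right)
    qed
    have vd: "v \<bullet> d = 0" using eql y0(2) by (simp add: d_def inner_diff_right)
    have zx: "z - x = lam *\<^sub>R (y0 - x) + d" by (simp add: d_def)
    show ?thesis
    proof (rule exI[of _ y0], rule exI[of _ d], intro conjI)
      show "y0 \<in> convex hull X" by (rule hull_inc[OF y0(1)])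
      show "v \<bullet> y0 = gmin X v" using y0(2) by simp
      show "\<forall>u. (\<forall>s\<in>X. u \<bullet> s \<le> u \<bullet> x) \<longrightarrow> 0 \<le> u \<bullet> d" using dual by blast
      show "v \<bullet> d = 0" by (rule vd)
      show "z - x = lam *\<^sub>R (y0 - x) + d" by (rule zx)
      show "lam \<le> 0 \<longrightarrow> y0 \<in> X" using y0(1) by simp
    qed
  next
    case False
    then have lpos: "lam > 0" by simp
    define C where "C = convex_cone hull ((\<lambda>s. x - s) ` X)"
    define E where "E = (\<lambda>k. (z - x + lam *\<^sub>R x) + (- lam) *\<^sub>R k) ` (convex hull X)"
    have "E \<inter> C \<noteq> {}"
    proof
      assume dis: "E \<inter> C = {}"
      have cC: "convex C" using convex_cone_convex_cone_hull unfolding C_def convex_cone_def by blast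
      have clC: "closed C" unfolding C_def using assms(1) by (intro closed_convex_cone_hull) simp
      have cE: "convex E" unfolding E_def by (intro convex_affinity convex_convex_hull)
      have kE: "compact E" unfolding E_def using assms(1)
        by (intro compact_affinity finite_imp_compact_convex_hull)
      have neE: "E \<noteq> {}" unfolding E_def using hull_inc[OF assms(2)] by blast
      obtain a b where ab: "\<forall>c\<in>C. a \<bullet> c < b" "\<forall>e\<in>E. b < a \<bullet> e"
        using separating_hyperplane_closed_compact[OF cC clC cE kE neE] dis by (metis inf_commute)
      have "0 \<in> C" unfolding C_def by (rule convex_cone_hull_contains_0)
      then have bpos: "0 < b" using ab(1) by fastforce
      have an: "a \<bullet> (x - s) \<le> 0" if s: "s \<in> X" for s
      proof (rule ccontr)
        assume "\<not> a \<bullet> (x - s) \<le> 0"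
        then have pos: "a \<bullet> (x - s) > 0" by simp
        have "x - s \<in> C" unfolding C_def using s by (intro hull_inc) blast
        moreover have "conic C" using convex_cone_convex_cone_hull unfolding C_def convex_cone_def by blast
        ultimately have "(b / (a \<bullet> (x - s))) *\<^sub>R (x - s) \<in> C"
          using bpos pos unfolding conic_def by (simp add: less_imp_le)
        then have "a \<bullet> ((b / (a \<bullet> (x - s))) *\<^sub>R (x - s)) < b" using ab(1) by blast
        then show False using pos by simp
      qed
      define w where "w = - a"
      have wN: "\<forall>s\<in>X. w \<bullet> s \<le> w \<bullet> x"
      proof
        fix s assume "s \<in> X"
        then show "w \<bullet> s \<le> w \<bullet> x" using an by (simp add: w_def inner_diff_right)
      qed
      obtain y where y: "y \<in> X" "gmin X w = w \<bullet> y" using gmin_in[OF assms(1) Xne] by blast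
      have "(z - x + lam *\<^sub>R x) + (- lam) *\<^sub>R y \<in> E" unfolding E_def using hull_inc[OF y(1)] by blast
      then have "b < a \<bullet> ((z - x + lam *\<^sub>R x) + (- lam) *\<^sub>R y)" using ab(2) by blast
      then have neg: "w \<bullet> (z - x) - lam * (w \<bullet> (y - x)) < 0"
        using bpos by (simp add: w_def inner_add_right inner_diff_right algebra_simps)
      have "lam * (gmin X w - w \<bullet> x) \<le> w \<bullet> (z - x)" using starl[OF wN] .
      then have "lam * (w \<bullet> (y - x)) \<le> w \<bullet> (z - x)" using y(2) by (simp add: inner_diff_right)
      then show False using neg by simp
    qed
    then obtain k where k: "k \<in> convex hull X" "(z - x + lam *\<^sub>R x) + (- lam) *\<^sub>R k \<in> C"
      unfolding E_def by blast
    define d where "d = (z - x + lam *\<^sub>R x) + (- lam) *\<^sub>R k"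
    have dC: "d \<in> C" using k(2) by (simp add: d_def)
    have dual: "0 \<le> u \<bullet> d" if u: "\<forall>s\<in>X. u \<bullet> s \<le> u \<bullet> x" for u
      using cone_dual[OF u] dC by (simp add: C_def)
    have zx: "z - x = lam *\<^sub>R (k - x) + d" by (simp add: d_def algebra_simps)
    have vd0: "0 \<le> v \<bullet> d" using dual assms(3) by blast
    have vk: "gmin X v \<le> v \<bullet> k" using hull_ge[of X "gmin X v" v k] gmin_le[OF assms(1)] k(1) by blast
    have "v \<bullet> d = v \<bullet> (z - x) - lam * (v \<bullet> (k - x))" using zx by (simp add: inner_add_right)
    then have vd: "v \<bullet> d = lam * (gmin X v - v \<bullet> k)" using eql by (simp add: algebra_simps inner_diff_right)
    have "lam * (gmin X v - v \<bullet> k) \<le> 0" using lpos vk by (intro mult_nonneg_nonpos) auto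
    then have "v \<bullet> d = 0" using vd vd0 by simp
    then have "lam * (gmin X v - v \<bullet> k) = 0" using vd by simp
    then have "v \<bullet> k = gmin X v" using lpos by simp
    show ?thesis
    proof (rule exI[of _ k], rule exI[of _ d], intro conjI)
      show "k \<in> convex hull X" by (rule k(1))
      show "v \<bullet> k = gmin X v" by fact
      show "\<forall>u. (\<forall>s\<in>X. u \<bullet> s \<le> u \<bullet> x) \<longrightarrow> 0 \<le> u \<bullet> d" using dual by blast
      show "v \<bullet> d = 0" by fact
      show "z - x = lam *\<^sub>R (k - x) + d" by (rule zx)
      show "lam \<le> 0 \<longrightarrow> k \<in> X" using lpos by simp
    qed
  qed
qed




lemma core:
  assumes "finite X" "convex_position X" "\<not> collinear X" "x \<in> X" "\<not> good X x z"
  shows "\<exists>a b c. tallest_triangle X a b c \<and> x \<in> {a, b, c} \<and> \<not> good {a, b, c} x z"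
proof -
  obtain v m where v: "v \<noteq> 0" "\<forall>s\<in>X. v \<bullet> s \<le> v \<bullet> x" "0 < m"
    and star: "\<And>u. (\<forall>s\<in>X. u \<bullet> s \<le> u \<bullet> x) \<Longrightarrow> m * (u \<bullet> x - gmin X u) \<le> u \<bullet> z - gmin X u"
    and eq: "v \<bullet> z - gmin X v = m * (v \<bullet> x - gmin X v)"
    using core_min[OF assms] by blast
  define lam where "lam = 1 - m"
  have lam1: "lam < 1" using v(3) by (simp add: lam_def)
  obtain k d where k: "k \<in> convex hull X" "v \<bullet> k = gmin X v"
    and dual: "\<forall>u. (\<forall>s\<in>X. u \<bullet> s \<le> u \<bullet> x) \<longrightarrow> 0 \<le> u \<bullet> d"
    and vd: "v \<bullet> d = 0" and zx: "z - x = lam *\<^sub>R (k - x) + d" and kX: "lam \<le> 0 \<longrightarrow> k \<in> X"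
    using core_rep[OF assms(1,4) v(2) star eq lam_def] by blast
  define g where "g = gmin X v"
  have gle: "\<forall>s\<in>X. g \<le> v \<bullet> s" using gmin_le[OF assms(1)] by (simp add: g_def)
  have kY: "k \<in> convex hull {s\<in>X. v \<bullet> s = g}"
    using face_hull[OF assms(1) k(1) gle] k(2) by (simp add: g_def)
  show ?thesis
  proof (cases "d = 0")
    case False
    obtain w where w: "w \<in> X" "v \<bullet> w = v \<bullet> x" "d \<bullet> (w - x) < 0"
      using exists_neg_side[OF assms(1) v(2) _ vd False] dual by blast
    define S where "S = {s\<in>X. v \<bullet> s = v \<bullet> x \<and> 0 < (-d) \<bullet> (s - x)}"
    have "w \<in> S" using w by (simp add: S_def)
    then obtain x1 where x1: "x1 \<in> S" "X \<inter> open_segment x x1 = {}"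
      using consec[OF assms(1,4) S_def] by blast
    have x1X: "x1 \<in> X" "v \<bullet> x1 = v \<bullet> x" "0 < (-d) \<bullet> (x1 - x)" using x1(1) by (auto simp: S_def)
    have x1ne: "x1 \<noteq> x" using x1X(3) by auto
    have nz: "x1 - x \<noteq> 0" using x1ne by simp
    have vx1: "v \<bullet> (x1 - x) = 0" using x1X(2) by (simp add: inner_diff_right)
    define tau where "tau = ((x1 - x) \<bullet> d) / ((x1 - x) \<bullet> (x1 - x))"
    have dtau: "d = tau *\<^sub>R (x1 - x)" unfolding tau_def by (rule par[OF v(1) vx1 vd nz])
    have pos11: "(x1 - x) \<bullet> (x1 - x) > 0" using nz by simp
    have "(x1 - x) \<bullet> d < 0" using x1X(3) by (simp add: inner_commute)
    then have tauneg: "tau < 0" unfolding tau_def using pos11 by (simp add: divide_neg_pos)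
    obtain y0 where y0: "y0 \<in> X" "g = v \<bullet> y0" using gmin_in[OF assms(1)] assms(4) by (auto simp: g_def)
    define Y where "Y = {s\<in>X. v \<bullet> s = g}"
    define sg where "sg = (if 0 \<le> lam then 1 else - 1 :: real)"
    define f where "f s = sg * ((x1 - x) \<bullet> s)" for s
    have fY: "finite Y" "Y \<noteq> {}" using assms(1) y0 by (auto simp: Y_def)
    define M where "M = Max (f ` Y)"
    have "M \<in> f ` Y" unfolding M_def using fY by (intro Max_in) auto
    then obtain c where c: "c \<in> Y" "f c = M" by auto
    have fle: "f s \<le> f c" if "s \<in> Y" for s unfolding c(2) M_def using fY that by (intro Max_ge) auto
    have cX: "c \<in> X" "v \<bullet> c = g" using c(1) by (auto simp: Y_def)
    have "(sg *\<^sub>R (x1 - x)) \<bullet> k \<le> f c"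
      using hull_le[of Y "sg *\<^sub>R (x1 - x)" "f c" k] fle kY by (simp add: f_def Y_def)
    then have fk: "sg * ((x1 - x) \<bullet> (k - c)) \<le> 0" by (simp add: f_def inner_diff_right algebra_simps)
    have vkc: "v \<bullet> (k - c) = 0" using k(2) cX(2) by (simp add: g_def inner_diff_right)
    define s0 where "s0 = ((x1 - x) \<bullet> (k - c)) / ((x1 - x) \<bullet> (x1 - x))"
    have kc: "k - c = s0 *\<^sub>R (x1 - x)" unfolding s0_def by (rule par[OF v(1) vx1 vkc nz])
    have ls0: "lam * s0 \<le> 0"
    proof (cases "0 \<le> lam")
      case True
      then have "(x1 - x) \<bullet> (k - c) \<le> 0" using fk by (simp add: sg_def)
      then have "s0 \<le> 0" unfolding s0_def using pos11 by (simp add: divide_nonpos_pos)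
      then show ?thesis using True by (simp add: mult_nonneg_nonpos)
    next
      case False
      then have "(x1 - x) \<bullet> (k - c) \<ge> 0" using fk by (simp add: sg_def)
      then have "s0 \<ge> 0" unfolding s0_def using pos11 by simp
      then show ?thesis using False by (simp add: mult_nonpos_nonneg)
    qed
    have zx2: "z - x = (lam * s0 + tau) *\<^sub>R (x1 - x) + lam *\<^sub>R (c - x)"
    proof -
      have kx: "k - x = (c - x) + s0 *\<^sub>R (x1 - x)" using kc by (simp add: algebra_simps)
      have "z - x = lam *\<^sub>R ((c - x) + s0 *\<^sub>R (x1 - x)) + tau *\<^sub>R (x1 - x)"
        using zx unfolding kx dtau .
      then show ?thesis by (simp add: scaleR_add_right scaleR_add_left add_ac)
    qed
    have T: "tallest_triangle X x x1 c"
    proof (rule tallest_from_dir[OF assms(1) v(1) assms(4) x1X(1) x1ne[symmetric] v(2) x1X(2) x1(2) cX(1)])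
      show "\<forall>s\<in>X. v \<bullet> c \<le> v \<bullet> s" using gle cX(2) by simp
    qed
    have ncol: "\<not> collinear {x, x1, c}" using tallest_nondeg[OF T assms(3)] .
    have bad: "\<not> good {x, x1, c} x z"
      by (rule bad_triangle[OF ncol zx2]) (use ls0 tauneg lam1 in auto)
    show ?thesis using T bad by blast
  next
    case True
    then have zk: "z - x = lam *\<^sub>R (k - x)" using zx by simp
    show ?thesis
    proof (cases "k \<in> X")
      case True
      have kmin: "\<forall>s\<in>X. v \<bullet> k \<le> v \<bullet> s" using gle k(2) by (simp add: g_def)
      obtain a b c where T: "tallest_triangle X a b c" "x \<in> {a, b, c}" "k \<in> {a, b, c}"
        using pair_lemma[OF assms(1,3) v(1) assms(4) True v(2) kmin] by blast
      have "\<not> collinear {a, b, c}" using tallest_nondeg[OF T(1) assms(3)] .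
      then have "\<not> good {a, b, c} x z" using bad_pair T(2,3) zk lam1 by blast
      then show ?thesis using T by blast
    next
      case False
      obtain y1 y2 th where yy: "y1 \<in> X" "y2 \<in> X" "v \<bullet> y1 = g" "v \<bullet> y2 = g" "y1 \<noteq> y2"
        "X \<inter> open_segment y1 y2 = {}" "0 < th" "th < 1" "k = (1 - th) *\<^sub>R y1 + th *\<^sub>R y2"
        using between[OF assms(1) v(1) False _ kY] k(2) by (auto simp: g_def)
      have T: "tallest_triangle X y1 y2 x"
      proof (rule tallest_from_dir[of X "-v"])
        show "finite X" "-v \<noteq> 0" "y1 \<in> X" "y2 \<in> X" "y1 \<noteq> y2" "x \<in> X"
          "X \<inter> open_segment y1 y2 = {}" using assms(1,4) v(1) yy by auto
        show "\<forall>s\<in>X. (-v) \<bullet> s \<le> (-v) \<bullet> y1" using gle yy(3) by simp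
        show "(-v) \<bullet> y2 = (-v) \<bullet> y1" using yy(3,4) by simp
        show "\<forall>s\<in>X. (-v) \<bullet> x \<le> (-v) \<bullet> s" using v(2) by simp
      qed
      have "\<not> collinear {y1, y2, x}" using tallest_nondeg[OF T assms(3)] .
      then have ncol: "\<not> collinear {x, y1, y2}" by (simp add: insert_commute)
      have zx3: "z - x = (lam * (1 - th)) *\<^sub>R (y1 - x) + (lam * th) *\<^sub>R (y2 - x)"
      proof -
        have kx: "k - x = (1 - th) *\<^sub>R (y1 - x) + th *\<^sub>R (y2 - x)" using yy(9) by (simp add: algebra_simps)
        have "z - x = lam *\<^sub>R ((1 - th) *\<^sub>R (y1 - x) + th *\<^sub>R (y2 - x))" using zk unfolding kx .
        then show ?thesis by (simp add: scaleR_add_right)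
      qed
      have c1: "lam * (1 - th) < 1"
      proof (cases "0 \<le> lam")
        case True
        have "lam * (1 - th) \<le> lam" using True yy(7) by (simp add: mult_left_le)
        then show ?thesis using lam1 by simp
      next
        case False
        then have "lam * (1 - th) \<le> 0" using yy(8) by (simp add: mult_nonpos_nonneg)
        then show ?thesis by simp
      qed
      have c2: "lam * th < 1"
      proof (cases "0 \<le> lam")
        case True
        have "lam * th \<le> lam" using True yy(8) by (simp add: mult_left_le)
        then show ?thesis using lam1 by simp
      next
        case False
        then have "lam * th \<le> 0" using yy(7) by (simp add: mult_nonpos_nonneg)
        then show ?thesis by simp
      qed
      have c3: "lam * (1 - th) + lam * th < 1" using lam1 by (simp add: algebra_simps)
      have bad: "\<not> good {x, y1, y2} x z" by (rule bad_triangle[OF ncol zx3 c1 c2 c3])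
      have "{y1, y2, x} = {x, y1, y2}" by (simp add: insert_commute)
      then show ?thesis using T bad by (metis insertI1 insert_commute)
    qed
  qed
qed




theorem mainTheorem6:
  fixes X :: "point set"
  assumes "finite X" and "convex_position X" and "\<not> collinear X"
  shows "admissible_centers X =
    \<Inter> {admissible_centers {a, b, c} | a b c. tallest_triangle X a b c}"
proof (rule equalityI)
  show "admissible_centers X \<subseteq> \<Inter> {admissible_centers {a, b, c} | a b c. tallest_triangle X a b c}"
  proof
    fix p assume p: "p \<in> admissible_centers X"
    show "p \<in> \<Inter> {admissible_centers {a, b, c} | a b c. tallest_triangle X a b c}"
    proof
      fix M assume "M \<in> {admissible_centers {a, b, c} | a b c. tallest_triangle X a b c}"
      then obtain a b c where abc: "M = admissible_centers {a, b, c}" "tallest_triangle X a b c" by blast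
      have sub: "{a, b, c} \<subseteq> X" using abc(2) unfolding tallest_triangle_def is_side_def by blast
      have "{a, b, c} \<union> reflect_set {a, b, c} p \<subseteq> X \<union> reflect_set X p"
        using sub unfolding reflect_set_def by blast
      moreover have "convex_position (X \<union> reflect_set X p)" using p by (simp add: admissible_centers_def)
      ultimately have "convex_position ({a, b, c} \<union> reflect_set {a, b, c} p)" using cp_mono by blast
      then show "p \<in> M" using abc(1) by (simp add: admissible_centers_def)
    qed
  qed
next
  show "\<Inter> {admissible_centers {a, b, c} | a b c. tallest_triangle X a b c} \<subseteq> admissible_centers X"
  proof
    fix p assume p: "p \<in> \<Inter> {admissible_centers {a, b, c} | a b c. tallest_triangle X a b c}"
    have allT: "convex_position ({a, b, c} \<union> reflect_set {a, b, c} p)" if "tallest_triangle X a b c" for a b c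
    proof -
      have "admissible_centers {a, b, c} \<in> {admissible_centers {a, b, c} | a b c. tallest_triangle X a b c}"
        using that by blast
      then have "p \<in> admissible_centers {a, b, c}" using p by blast
      then show ?thesis by (simp add: admissible_centers_def)
    qed
    have "good X x (2 *\<^sub>R p - x)" if x: "x \<in> X" for x
    proof (rule ccontr)
      assume "\<not> good X x (2 *\<^sub>R p - x)"
      then obtain a b c where T: "tallest_triangle X a b c" "x \<in> {a, b, c}" "\<not> good {a, b, c} x (2 *\<^sub>R p - x)"
        using core[OF assms x] by blast
      have "good {a, b, c} x (2 *\<^sub>R p - x)" using cp_imp_good[OF allT[OF T(1)] T(2)] .
      then show False using T(3) by simp
    qed
    then have "convex_position (X \<union> reflect_set X p)" using good_imp_cp by blast
    then show "p \<in> admissible_centers X" by (simp add: admissible_centers_def)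
  qed
qed



end
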